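(* Let $n\ge2$ and let $R=\frac1n E_n$ be the $n\times n$ comonotone checkerboard copula ($E_n$ the identity matrix). For every $n\times n$ checkerboard copula $P\neq R$, the function $\alpha\mapsto\tau(\alpha R+(1-\alpha)P)$ is strictly increasing on $[0,1]$.
   Context: An $n\times n$ checkerboard copula is a real $n\times n$ matrix with nonnegative entries whose row and column sums all equal $\frac1n$. $\Xi=(\xi_{ij})$ with $\xi_{ij}=1$ if $i=j$, $2$ if $i>j$, $0$ if $i<j$. For an $n\times n$ matrix $M$, $\tau(M)=1-\mathrm{tr}(\Xi M\Xi M^\top)$ (Kendall's $\tau$ of a checkerboard copula). *)

theory Defs
  imports Complex_Main
begin

text \<open>n x n real matrices are represented as functions nat => nat => real,
  only the entries with indices i, j < n being relevant (indices 0..n-1).\<close>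

definition checkerboard_copula :: "nat \<Rightarrow> (nat \<Rightarrow> nat \<Rightarrow> real) \<Rightarrow> bool" where
  "checkerboard_copula n M \<longleftrightarrow>
     (\<forall>i<n. \<forall>j<n. M i j \<ge> 0) \<and>
     (\<forall>i<n. (\<Sum>j<n. M i j) = 1 / real n) \<and>
     (\<forall>j<n. (\<Sum>i<n. M i j) = 1 / real n)"

definition Xi :: "nat \<Rightarrow> nat \<Rightarrow> real" where
  "Xi i j = (if i = j then 1 else if i > j then 2 else 0)"

definition mat_mult :: "nat \<Rightarrow> (nat \<Rightarrow> nat \<Rightarrow> real) \<Rightarrow> (nat \<Rightarrow> nat \<Rightarrow> real) \<Rightarrow> (nat \<Rightarrow> nat \<Rightarrow> real)" where
  "mat_mult n A B = (\<lambda>i k. \<Sum>j<n. A i j * B j k)"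

definition mat_transpose :: "(nat \<Rightarrow> nat \<Rightarrow> real) \<Rightarrow> (nat \<Rightarrow> nat \<Rightarrow> real)" where
  "mat_transpose A = (\<lambda>i j. A j i)"

definition mat_trace :: "nat \<Rightarrow> (nat \<Rightarrow> nat \<Rightarrow> real) \<Rightarrow> real" where
  "mat_trace n A = (\<Sum>i<n. A i i)"

definition kendall_tau :: "nat \<Rightarrow> (nat \<Rightarrow> nat \<Rightarrow> real) \<Rightarrow> real" where
  "kendall_tau n M =
     1 - mat_trace n (mat_mult n (mat_mult n (mat_mult n Xi M) Xi) (mat_transpose M))"

definition comonotone :: "nat \<Rightarrow> nat \<Rightarrow> nat \<Rightarrow> real" where
  "comonotone n = (\<lambda>i j. if i = j then 1 / real n else 0)"

end

theory Submission
  imports Defs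
begin

definition GG :: "nat \<Rightarrow> (nat\<Rightarrow>nat\<Rightarrow>real) \<Rightarrow> nat \<Rightarrow> nat \<Rightarrow> real" where
  "GG n A i l = (\<Sum>j<n. \<Sum>k<n. Xi i j * A j k * Xi k l)"
definition TT :: "nat \<Rightarrow> (nat\<Rightarrow>nat\<Rightarrow>real) \<Rightarrow> (nat\<Rightarrow>nat\<Rightarrow>real) \<Rightarrow> real" where
  "TT n A C = (\<Sum>i<n. \<Sum>l<n. GG n A i l * C i l)"
definition Rect :: "nat \<Rightarrow> (nat\<Rightarrow>nat\<Rightarrow>real) \<Rightarrow> nat \<Rightarrow> nat \<Rightarrow> real" where
  "Rect n M a b = (\<Sum>j<n. \<Sum>k<n. if j < a \<and> b \<le> k then M j k else 0)"

lemma GG_mm: "GG n M i l = mat_mult n (mat_mult n Xi M) Xi i l"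
  unfolding GG_def mat_mult_def
  by (simp add: sum_distrib_right) (rule sum.swap)

lemma tau_TT: "kendall_tau n M = 1 - TT n M M"
  unfolding kendall_tau_def mat_trace_def TT_def GG_mm
  by (simp add: mat_mult_def mat_transpose_def)

lemma GG_rect:
  assumes "i < n" "l < n"
  shows "GG n M i l = Rect n M (Suc i) l + Rect n M i l + Rect n M (Suc i) (Suc l) + Rect n M i (Suc l)"
  unfolding GG_def Rect_def
  by (simp only: sum.distrib[symmetric]) (intro sum.cong refl, auto simp: Xi_def)

lemma ind_sum: "(\<Sum>j<n. if j < a then c else 0) = real (min a n) * (c::real)"
  by (induction n) (auto simp: min_def algebra_simps le_Suc_eq)

lemma ind_sum2: "(\<Sum>j<n. if b \<le> j \<and> j < a then c else 0) = real (min a n - b) * (c::real)"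
  by (induction n) (auto simp: min_def algebra_simps of_nat_diff le_Suc_eq)

lemma TT_swap: "TT n A C = (\<Sum>j<n. \<Sum>k<n. A j k * (\<Sum>i<n. \<Sum>l<n. Xi i j * Xi k l * C i l))"
proof -
  have 4: "(\<Sum>i<n. \<Sum>l<n. \<Sum>j<n. \<Sum>k<n. f i l j k) = (\<Sum>j<n. \<Sum>k<n. \<Sum>i<n. \<Sum>l<n. f i l j k)"
    for f :: "nat \<Rightarrow> nat \<Rightarrow> nat \<Rightarrow> nat \<Rightarrow> real"
  proof -
    have "(\<Sum>i<n. \<Sum>l<n. \<Sum>j<n. \<Sum>k<n. f i l j k) = (\<Sum>i<n. \<Sum>j<n. \<Sum>l<n. \<Sum>k<n. f i l j k)"
      by (rule sum.cong[OF refl], rule sum.swap)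
    also have "\<dots> = (\<Sum>i<n. \<Sum>j<n. \<Sum>k<n. \<Sum>l<n. f i l j k)"
      by (rule sum.cong[OF refl], rule sum.cong[OF refl], rule sum.swap)
    also have "\<dots> = (\<Sum>j<n. \<Sum>i<n. \<Sum>k<n. \<Sum>l<n. f i l j k)"
      by (rule sum.swap)
    also have "\<dots> = (\<Sum>j<n. \<Sum>k<n. \<Sum>i<n. \<Sum>l<n. f i l j k)"
      by (rule sum.cong[OF refl], rule sum.swap)
    finally show ?thesis .
  qed
  show ?thesis
    unfolding TT_def GG_def sum_distrib_right sum_distrib_left
    by (subst 4) (simp add: mult_ac)
qed

lemma copula_nonneg: "checkerboard_copula n P \<Longrightarrow> i < n \<Longrightarrow> j < n \<Longrightarrow> P i j \<ge> 0"
  unfolding checkerboard_copula_def by blast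
lemma copula_row: "checkerboard_copula n P \<Longrightarrow> i < n \<Longrightarrow> (\<Sum>j<n. P i j) = 1 / real n"
  unfolding checkerboard_copula_def by blast
lemma copula_col: "checkerboard_copula n P \<Longrightarrow> j < n \<Longrightarrow> (\<Sum>i<n. P i j) = 1 / real n"
  unfolding checkerboard_copula_def by blast

lemma Rect_nonneg: "checkerboard_copula n P \<Longrightarrow> Rect n P a b \<ge> 0"
  unfolding Rect_def by (intro sum_nonneg) (auto simp: copula_nonneg)

lemma rect_lower:
  assumes cc: "checkerboard_copula n P" and an: "a \<le> n"
  shows "Rect n P a b \<ge> (real a - real b) / real n"
proof -
  have e: "Rect n P a b = (\<Sum>j<n. \<Sum>k<n. if j < a then P j k else 0)
      - (\<Sum>j<n. \<Sum>k<n. if j < a \<and> k < b then P j k else 0)"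
    unfolding Rect_def sum_subtractf[symmetric] by (intro sum.cong refl) auto
  have 1: "(\<Sum>j<n. \<Sum>k<n. if j < a then P j k else 0) = real a / real n"
  proof -
    have "(\<Sum>j<n. \<Sum>k<n. if j < a then P j k else 0) = (\<Sum>j<n. if j < a then 1 / real n else 0)"
      by (intro sum.cong refl) (auto simp: copula_row[OF cc])
    also have "\<dots> = real a / real n" using an by (simp add: ind_sum min_def)
    finally show ?thesis .
  qed
  have 2: "(\<Sum>j<n. \<Sum>k<n. if j < a \<and> k < b then P j k else 0) \<le> real b / real n"
  proof -
    have "(\<Sum>j<n. \<Sum>k<n. if j < a \<and> k < b then P j k else 0) \<le> (\<Sum>j<n. \<Sum>k<n. if k < b then P j k else 0)"
      by (intro sum_mono) (auto simp: copula_nonneg[OF cc])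
    also have "\<dots> = (\<Sum>k<n. \<Sum>j<n. if k < b then P j k else 0)" by (rule sum.swap)
    also have "\<dots> = (\<Sum>k<n. if k < b then 1 / real n else 0)"
      by (intro sum.cong refl) (auto simp: copula_col[OF cc])
    also have "\<dots> = real (min b n) / real n" by (simp add: ind_sum)
    also have "\<dots> \<le> real b / real n" by (intro divide_right_mono) auto
    finally show ?thesis .
  qed
  show ?thesis using e 1 2 by (simp add: diff_divide_distrib)
qed

lemma rect_R:
  assumes an: "a \<le> n"
  shows "Rect n (comonotone n) a b = real (a - b) / real n"
proof -
  have "Rect n (comonotone n) a b = (\<Sum>j<n. if b \<le> j \<and> j < a then 1 / real n else 0)"
    unfolding Rect_def
  proof (intro sum.cong refl)
    fix j assume "j \<in> {..<n}"
    have "\<And>k. (if j < a \<and> b \<le> k then comonotone n j k else 0)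
       = (if j = k then (if b \<le> j \<and> j < a then 1 / real n else 0) else 0)"
      by (auto simp: comonotone_def)
    then show "(\<Sum>k<n. if j < a \<and> b \<le> k then comonotone n j k else 0)
       = (if b \<le> j \<and> j < a then 1 / real n else 0)" using \<open>j \<in> {..<n}\<close> by simp
  qed
  also have "\<dots> = real (a - b) / real n" using an by (simp add: ind_sum2 min_def)
  finally show ?thesis .
qed

lemma rect_ge:
  assumes cc: "checkerboard_copula n P" and an: "a \<le> n"
  shows "Rect n P a b \<ge> Rect n (comonotone n) a b"
proof (cases "b \<le> a")
  case True
  then show ?thesis using rect_lower[OF cc an, of b] rect_R[OF an, of b] by (simp add: of_nat_diff)
next
  case False
  then show ?thesis using Rect_nonneg[OF cc, of a b] rect_R[OF an, of b] by simp
qed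

definition NN :: "nat \<Rightarrow> nat \<Rightarrow> nat" where
  "NN i l = (Suc i - l) + (i - l) + (Suc i - Suc l) + (i - Suc l)"

lemma GR: "i < n \<Longrightarrow> l < n \<Longrightarrow> GG n (comonotone n) i l = real (NN i l) / real n"
  by (simp add: GG_rect rect_R NN_def add_divide_distrib)

lemma GP_ge: "checkerboard_copula n P \<Longrightarrow> i < n \<Longrightarrow> l < n \<Longrightarrow> GG n P i l \<ge> GG n (comonotone n) i l"
  unfolding GG_rect by (intro add_mono rect_ge) auto

lemma NN_diag: "NN i i = 1" by (simp add: NN_def)
lemma NN_sym: "NN i l + 4 * l = NN l i + 4 * i" by (simp add: NN_def)
lemma NN_off: "i \<noteq> l \<Longrightarrow> NN i l + NN l i \<ge> 4" by (auto simp: NN_def)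
lemma NN_2: "NN i l + NN l i \<ge> 2" by (auto simp: NN_def)

lemma GG_comb: "GG n (\<lambda>i j. \<alpha> * A i j + (1 - \<alpha>) * B i j) i l = \<alpha> * GG n A i l + (1 - \<alpha>) * GG n B i l"
proof -
  have "GG n (\<lambda>i j. \<alpha> * A i j + (1 - \<alpha>) * B i j) i l
     = (\<Sum>j<n. \<Sum>k<n. \<alpha> * (Xi i j * A j k * Xi k l) + (1 - \<alpha>) * (Xi i j * B j k * Xi k l))"
    unfolding GG_def by (intro sum.cong refl) (simp add: algebra_simps)
  also have "\<dots> = \<alpha> * GG n A i l + (1 - \<alpha>) * GG n B i l"
    unfolding GG_def by (simp add: sum.distrib sum_distrib_left)
  finally show ?thesis .
qed

lemma TT_comb: "TT n (\<lambda>i j. \<alpha> * A i j + (1 - \<alpha>) * B i j) (\<lambda>i j. \<alpha> * A i j + (1 - \<alpha>) * B i j)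
   = \<alpha>^2 * TT n A A + \<alpha> * (1 - \<alpha>) * (TT n A B + TT n B A) + (1 - \<alpha>)^2 * TT n B B"
proof -
  have "TT n (\<lambda>i j. \<alpha> * A i j + (1 - \<alpha>) * B i j) (\<lambda>i j. \<alpha> * A i j + (1 - \<alpha>) * B i j)
     = (\<Sum>i<n. \<Sum>l<n. \<alpha>^2 * (GG n A i l * A i l) + \<alpha> * (1 - \<alpha>) * (GG n A i l * B i l)
          + \<alpha> * (1 - \<alpha>) * (GG n B i l * A i l) + (1 - \<alpha>)^2 * (GG n B i l * B i l))"
    unfolding TT_def GG_comb by (intro sum.cong refl) (simp add: algebra_simps power2_eq_square)
  also have "\<dots> = \<alpha>^2 * TT n A A + \<alpha> * (1 - \<alpha>) * TT n A B + \<alpha> * (1 - \<alpha>) * TT n B A + (1 - \<alpha>)^2 * TT n B B"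
    unfolding TT_def by (simp add: sum.distrib sum_distrib_left)
  finally show ?thesis by (simp add: algebra_simps)
qed

lemma TT_PR: "TT n P (comonotone n) = (\<Sum>j<n. \<Sum>k<n. P j k * GG n (comonotone n) k j)"
  unfolding TT_swap
proof (intro sum.cong refl)
  fix j k assume j: "j \<in> {..<n}" and k: "k \<in> {..<n}"
  have a: "(\<Sum>i<n. \<Sum>l<n. Xi i j * Xi k l * comonotone n i l) = (\<Sum>i<n. Xi i j * Xi k i / real n)"
  proof (intro sum.cong refl)
    fix i assume "i \<in> {..<n}"
    have "\<And>l. Xi i j * Xi k l * comonotone n i l = (if i = l then Xi i j * Xi k i / real n else 0)"
      by (auto simp: comonotone_def)
    then show "(\<Sum>l<n. Xi i j * Xi k l * comonotone n i l) = Xi i j * Xi k i / real n"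
      using \<open>i \<in> {..<n}\<close> by simp
  qed
  have b: "GG n (comonotone n) k j = (\<Sum>i<n. Xi i j * Xi k i / real n)"
    unfolding GG_def
  proof (intro sum.cong refl)
    fix i assume "i \<in> {..<n}"
    have "\<And>l. Xi k i * comonotone n i l * Xi l j = (if i = l then Xi i j * Xi k i / real n else 0)"
      by (auto simp: comonotone_def)
    then show "(\<Sum>l<n. Xi k i * comonotone n i l * Xi l j) = Xi i j * Xi k i / real n"
      using \<open>i \<in> {..<n}\<close> by simp
  qed
  show "P j k * (\<Sum>i<n. \<Sum>l<n. Xi i j * Xi k l * comonotone n i l) = P j k * GG n (comonotone n) k j"
    using a b by simp
qed

lemma sum_id_n: "(\<Sum>j<n. real j) = real n * (real n - 1) / 2"
  by (induction n) (auto simp: field_simps)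

lemma q_eq:
  assumes cc: "checkerboard_copula n P" and n: "n > 0"
  shows "TT n (comonotone n) P = TT n P (comonotone n)"
proof -
  let ?G = "GG n (comonotone n)"
  have d: "?G j k - ?G k j = 4 * (real j - real k) / real n" if "j < n" "k < n" for j k
  proof -
    have "real (NN j k) + 4 * real k = real (NN k j) + 4 * real j"
      using NN_sym[of j k] by (metis of_nat_add of_nat_mult of_nat_numeral)
    then show ?thesis using that by (simp add: GR field_simps)
  qed
  define c where "c = 4 / real n"
  have d2: "?G j k - ?G k j = c * (real j - real k)" if "j < n" "k < n" for j k
    using d[OF that] by (simp add: c_def)
  have "TT n (comonotone n) P - TT n P (comonotone n) = (\<Sum>j<n. \<Sum>k<n. P j k * (?G j k - ?G k j))"
    unfolding TT_PR by (simp add: TT_def sum_subtractf[symmetric] algebra_simps)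
  also have "\<dots> = (\<Sum>j<n. \<Sum>k<n. c * (real j * P j k) - c * (real k * P j k))"
    by (intro sum.cong refl) (simp add: d2 algebra_simps)
  also have "\<dots> = c * ((\<Sum>j<n. real j * (\<Sum>k<n. P j k)) - (\<Sum>k<n. real k * (\<Sum>j<n. P j k)))"
  proof -
    have e1: "(\<Sum>j<n. \<Sum>k<n. c * (real j * P j k) - c * (real k * P j k))
       = c * (\<Sum>j<n. \<Sum>k<n. real j * P j k) - c * (\<Sum>j<n. \<Sum>k<n. real k * P j k)"
      by (simp only: sum_subtractf sum_distrib_left)
    have e2: "(\<Sum>j<n. \<Sum>k<n. real j * P j k) = (\<Sum>j<n. real j * (\<Sum>k<n. P j k))"
      by (simp only: sum_distrib_left)
    have e3: "(\<Sum>j<n. \<Sum>k<n. real k * P j k) = (\<Sum>k<n. real k * (\<Sum>j<n. P j k))"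
      by (subst sum.swap) (simp only: sum_distrib_left)
    show ?thesis using e1 e2 e3 by (simp add: right_diff_distrib)
  qed
  also have "\<dots> = 0"
    by (simp add: copula_row[OF cc] copula_col[OF cc])
  finally show ?thesis by simp
qed

lemma r_val:
  assumes n: "n > 0"
  shows "TT n (comonotone n) (comonotone n) = 1 / real n"
proof -
  have "TT n (comonotone n) (comonotone n) = (\<Sum>i<n. GG n (comonotone n) i i / real n)"
    unfolding TT_def
  proof (intro sum.cong refl)
    fix i assume i: "i \<in> {..<n}"
    have "\<And>l. GG n (comonotone n) i l * comonotone n i l = (if i = l then GG n (comonotone n) i i / real n else 0)"
      by (auto simp: comonotone_def)
    then show "(\<Sum>l<n. GG n (comonotone n) i l * comonotone n i l) = GG n (comonotone n) i i / real n"
      using i by simp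
  qed
  also have "\<dots> = (\<Sum>i<n. 1 / (real n * real n))"
    by (intro sum.cong refl) (simp add: GR NN_diag)
  also have "\<dots> = 1 / real n" using n by simp
  finally show ?thesis .
qed

lemma p_ge:
  assumes cc: "checkerboard_copula n P"
  shows "TT n P P \<ge> TT n (comonotone n) P"
  unfolding TT_def
  by (intro sum_mono mult_right_mono GP_ge[OF cc]) (auto simp: copula_nonneg[OF cc])

lemma c_pos:
  assumes cc: "checkerboard_copula n P" and n: "n > 0"
    and j0: "j0 < n" and k0: "k0 < n" and jk: "j0 \<noteq> k0" and pos: "P j0 k0 > 0"
  shows "TT n (comonotone n) P + TT n P (comonotone n) > 2 * TT n (comonotone n) (comonotone n)"
proof -
  let ?G = "GG n (comonotone n)"
  define f where "f j k = P j k * (?G j k + ?G k j - 2 / real n)" for j k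
  have tot: "(\<Sum>j<n. \<Sum>k<n. P j k) = 1"
    using n by (simp add: copula_row[OF cc])
  have fnn: "f j k \<ge> 0" if "j < n" "k < n" for j k
  proof -
    have "real (NN j k) + real (NN k j) \<ge> 2" using NN_2[of j k] by linarith
    then have "?G j k + ?G k j - 2 / real n \<ge> 0"
      using that n by (simp add: GR diff_divide_distrib[symmetric] add_divide_distrib[symmetric])
    then show ?thesis unfolding f_def using copula_nonneg[OF cc that] by simp
  qed
  have fpos: "f j0 k0 > 0"
  proof -
    have "real (NN j0 k0) + real (NN k0 j0) \<ge> 4" using NN_off[OF jk] by linarith
    then have "?G j0 k0 + ?G k0 j0 - 2 / real n > 0"
      using j0 k0 n by (simp add: GR diff_divide_distrib[symmetric] add_divide_distrib[symmetric])
    then show ?thesis unfolding f_def using pos by simp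
  qed
  have "f j0 k0 \<le> (\<Sum>k<n. f j0 k)"
    by (rule member_le_sum) (use fnn j0 k0 in auto)
  also have "\<dots> \<le> (\<Sum>j<n. \<Sum>k<n. f j k)"
    by (rule member_le_sum[of _ _ "\<lambda>j. \<Sum>k<n. f j k"]) (use fnn j0 in \<open>auto intro: sum_nonneg\<close>)
  finally have sp: "(\<Sum>j<n. \<Sum>k<n. f j k) > 0" using fpos by linarith
  have "(\<Sum>j<n. \<Sum>k<n. f j k) = (\<Sum>j<n. \<Sum>k<n. ?G j k * P j k) + (\<Sum>j<n. \<Sum>k<n. P j k * ?G k j)
     - (2 / real n) * (\<Sum>j<n. \<Sum>k<n. P j k)"
    unfolding f_def by (simp add: sum_subtractf sum.distrib sum_distrib_left algebra_simps) (simp only: sum_divide_distrib)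
  also have "\<dots> = TT n (comonotone n) P + TT n P (comonotone n) - 2 * TT n (comonotone n) (comonotone n)"
    unfolding r_val[OF n] TT_PR[of n P] tot by (simp add: TT_def)
  finally show ?thesis using sp by linarith
qed

lemma offdiag:
  assumes cc: "checkerboard_copula n P" and ne: "\<exists>i<n. \<exists>j<n. P i j \<noteq> comonotone n i j"
  shows "\<exists>j<n. \<exists>k<n. j \<noteq> k \<and> P j k > 0"
proof (rule ccontr)
  assume "\<not> ?thesis"
  note nt = this
  have z: "P j k = 0" if "j < n" "k < n" "j \<noteq> k" for j k
  proof -
    have "\<not> P j k > 0" using nt that by blast
    then show ?thesis using copula_nonneg[OF cc that(1,2)] by simp
  qed
  obtain i j where ij: "i < n" "j < n" "P i j \<noteq> comonotone n i j" using ne by blast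
  show False
  proof (cases "i = j")
    case False
    then show ?thesis using z[OF ij(1,2)] ij(3) by (simp add: comonotone_def)
  next
    case True
    have "(\<Sum>k<n. P i k) = (\<Sum>k<n. if k = i then P i i else 0)"
      by (intro sum.cong refl) (use z ij in auto)
    also have "\<dots> = P i i" using ij by simp
    finally have "P i i = 1 / real n" using copula_row[OF cc ij(1)] by simp
    then show ?thesis using ij(3) True by (simp add: comonotone_def)
  qed
qed

theorem lemma11:
  fixes n :: nat and P :: "nat \<Rightarrow> nat \<Rightarrow> real"
  assumes "n \<ge> 2"
    and "checkerboard_copula n P"
    and "\<exists>i<n. \<exists>j<n. P i j \<noteq> comonotone n i j"
  shows "strict_mono_on {0..1::real}
           (\<lambda>\<alpha>. kendall_tau n (\<lambda>i j. \<alpha> * comonotone n i j + (1 - \<alpha>) * P i j))"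
proof (rule strict_mono_onI)
  have n: "n > 0" using assms(1) by simp
  note cc = assms(2)
  define r where "r = TT n (comonotone n) (comonotone n)"
  define q where "q = TT n (comonotone n) P"
  define p where "p = TT n P P"
  have q2: "TT n P (comonotone n) = q" unfolding q_def using q_eq[OF cc n] by simp
  have pq: "p \<ge> q" unfolding p_def q_def by (rule p_ge[OF cc])
  obtain j0 k0 where jk: "j0 < n" "k0 < n" "j0 \<noteq> k0" "P j0 k0 > 0"
    using offdiag[OF cc assms(3)] by blast
  have qr: "q > r" using c_pos[OF cc n jk] q2 unfolding q_def r_def by simp
  have h: "kendall_tau n (\<lambda>i j. x * comonotone n i j + (1 - x) * P i j)
      = 1 - (x^2 * r + 2 * x * (1 - x) * q + (1 - x)^2 * p)" for x
    unfolding tau_TT TT_comb q2 by (simp add: r_def q_def p_def)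
  fix a b :: real
  assume a: "a \<in> {0..1}" and b: "b \<in> {0..1}" and ab: "a < b"
  have key: "(a^2 * r + 2 * a * (1 - a) * q + (1 - a)^2 * p) - (b^2 * r + 2 * b * (1 - b) * q + (1 - b)^2 * p)
     = (b - a) * ((2 - (a + b)) * (p - q) + (a + b) * (q - r))"
    by (simp add: algebra_simps power2_eq_square)
  have s1: "(2 - (a + b)) * (p - q) \<ge> 0" using a b ab pq by (intro mult_nonneg_nonneg) auto
  have s2: "(a + b) * (q - r) > 0" using a b ab qr by (intro mult_pos_pos) auto
  have "(b - a) * ((2 - (a + b)) * (p - q) + (a + b) * (q - r)) > 0"
    using ab s1 s2 by (intro mult_pos_pos) auto
  then show "kendall_tau n (\<lambda>i j. a * comonotone n i j + (1 - a) * P i j)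
     < kendall_tau n (\<lambda>i j. b * comonotone n i j + (1 - b) * P i j)"
    unfolding h using key by linarith
qed

end
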